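(* Let $w_1,w_2$ be real numbers with $0\le w_1<w_2$, $\mathbf{w}=[w_1,w_2]^\top$, and define on $\mathbb{R}^2$ the ROWL penalty $\Omega_{\mathbf{w}}(\mathbf{x})=\mathbf{w}^\top|\mathbf{x}|_{\downarrow}$ and its envelope $\widetilde\Omega_{\mathbf{w}}=(\Omega_{\mathbf{w}}+\tfrac12\|\cdot\|^2)^{**}-\tfrac12\|\cdot\|^2$. For every $\delta>0$, the operator $R_\delta:=\mathrm{s\text{-}Prox}_{\widetilde\Omega_{\mathbf{w}}/(\delta+1)}:\mathbb{R}^2\to\mathbb{R}^2$ is the gradient of a (Fréchet) differentiable convex function, and this gradient is $(1+1/\delta)$-Lipschitz continuous.
   Context: $\|\cdot\|$ is the Euclidean norm on $\mathbb{R}^2$. For $\mathbf{x}\in\mathbb{R}^2$, $|\mathbf{x}|$ is the componentwise absolute value and $|\mathbf{x}|_{\downarrow}$ is $|\mathbf{x}|$ sorted in nonincreasing order. $g^{**}$ denotes the Fenchel biconjugate, where $g^*(u)=\sup_x(\langle x,u\rangle-g(x))$. For a function $g$ such that $\operatorname{argmin}_{\mathbf{y}}\big(g(\mathbf{y})+\frac12\|\mathbf{x}-\mathbf{y}\|^2\big)$ is a singleton for every $\mathbf{x}$, $\mathrm{s\text{-}Prox}_g(\mathbf{x})$ denotes that unique minimizer. *)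

theory Defs
  imports "HOL-Analysis.Analysis"
begin

definition fenchel_conj :: "('a::real_inner \<Rightarrow> ereal) \<Rightarrow> 'a \<Rightarrow> ereal" where
  "fenchel_conj g u = (SUP x. ereal (inner x u) - g x)"

definition fenchel_biconj :: "('a::real_inner \<Rightarrow> ereal) \<Rightarrow> 'a \<Rightarrow> ereal" where
  "fenchel_biconj g = fenchel_conj (fenchel_conj g)"

definition rowl :: "real \<Rightarrow> real \<Rightarrow> real^2 \<Rightarrow> real" where
  "rowl w1 w2 x = w1 * max \<bar>x$1\<bar> \<bar>x$2\<bar> + w2 * min \<bar>x$1\<bar> \<bar>x$2\<bar>"

definition rowl_env :: "real \<Rightarrow> real \<Rightarrow> real^2 \<Rightarrow> ereal" where
  "rowl_env w1 w2 x =
     fenchel_biconj (\<lambda>y. ereal (rowl w1 w2 y + (1/2) * (norm y)^2)) x - ereal ((1/2) * (norm x)^2)"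

definition prox_set :: "('a::real_normed_vector \<Rightarrow> ereal) \<Rightarrow> 'a \<Rightarrow> 'a set" where
  "prox_set g x = {y. \<forall>z. g y + ereal ((1/2) * (norm (x - y))^2) \<le> g z + ereal ((1/2) * (norm (x - z))^2)}"

definition sprox_defined :: "('a::real_normed_vector \<Rightarrow> ereal) \<Rightarrow> bool" where
  "sprox_defined g \<longleftrightarrow> (\<forall>x. \<exists>p. prox_set g x = {p})"

definition s_Prox :: "('a::real_normed_vector \<Rightarrow> ereal) \<Rightarrow> 'a \<Rightarrow> 'a" where
  "s_Prox g x = (THE p. prox_set g x = {p})"

end

theory Submission
  imports Defs
begin

lemma norm_comb_sq:
  fixes p y :: "'a::real_inner"
  shows "(norm ((1 - t) *\<^sub>R p + t *\<^sub>R y))^2 = (1-t) * (norm p)^2 + t * (norm y)^2 - t*(1-t)*(norm (y - p))^2"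
  unfolding power2_norm_eq_inner
  by (simp add: inner_add_left inner_add_right inner_diff_left inner_diff_right inner_commute algebra_simps)

locale gen =
  fixes C :: "'a::euclidean_space \<Rightarrow> real" and \<mu> :: real
  assumes cvx: "convex_on UNIV C" and nn: "\<And>y. C y \<ge> 0" and C0: "C 0 = 0" and mu: "\<mu> > 0"
begin

definition J where "J x y = C y + \<mu>/2 * (norm y)^2 - inner x y"

lemma strong:
  assumes min: "\<forall>z. J x p \<le> J x z"
  shows "J x p + \<mu>/2 * (norm (y - p))^2 \<le> J x y"
proof -
  define K where "K = \<mu>/2 * (norm (y - p))^2"
  have K0: "K \<ge> 0" using mu by (simp add: K_def)
  have key: "J x p + (1 - t) * K \<le> J x y" if t: "0 < t" "t < 1" for t
  proof -
    let ?z = "(1 - t) *\<^sub>R p + t *\<^sub>R y"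
    have c: "C ?z \<le> (1-t) * C p + t * C y"
      using cvx t by (intro convex_onD) auto
    have n: "(norm ?z)^2 = (1-t) * (norm p)^2 + t * (norm y)^2 - t*(1-t)*(norm (y - p))^2"
      by (rule norm_comb_sq)
    have i: "inner x ?z = (1-t) * inner x p + t * inner x y"
      by (simp add: inner_add_right)
    have n2: "\<mu>/2 * (norm ?z)^2 = (1-t)*(\<mu>/2*(norm p)^2) + t*(\<mu>/2*(norm y)^2) - t*(1-t)*K"
      by (subst n) (simp add: K_def field_simps)
    have e2: "(1-t)*J x p + t*J x y - t*(1-t)*K = (1-t)*C p + t*C y + ((1-t)*(\<mu>/2*(norm p)^2) + t*(\<mu>/2*(norm y)^2) - t*(1-t)*K) - ((1-t)*inner x p + t*inner x y)"
      unfolding J_def by (simp add: algebra_simps)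
    have "J x ?z \<le> (1-t) * J x p + t * J x y - t * (1 - t) * K"
      unfolding e2 unfolding J_def using c n2 i by linarith
    moreover have "J x p \<le> J x ?z" using min by auto
    ultimately have "t * J x p \<le> t * J x y - t * (1 - t) * K" by (simp add: algebra_simps)
    then have "t * (J x p + (1 - t) * K) \<le> t * J x y" by (simp add: algebra_simps)
    then show ?thesis using t by simp
  qed
  have "J x p + K \<le> J x y + e" if e: "e > 0" for e
  proof -
    define t where "t = e / (K + 2 * e)"
    have t0: "0 < t" "t < 1" using e K0 by (auto simp: t_def field_simps)
    have "t * K \<le> e"
    proof -
      have "t * K = e * (K / (K + 2 * e))" by (simp add: t_def)
      also have "\<dots> \<le> e * 1" using e K0 by (intro mult_left_mono) (auto simp: field_simps)
      finally show ?thesis by simp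
    qed
    then show ?thesis using key[OF t0] by (simp add: algebra_simps)
  qed
  then have "J x p + K \<le> J x y" by (rule field_le_epsilon)
  then show ?thesis by (simp add: K_def)
qed

lemma contC: "continuous_on UNIV C"
  by (rule convex_on_continuous) (auto simp: cvx)

lemma contJ: "continuous_on S (J x)"
  unfolding J_def
  by (intro continuous_intros continuous_on_subset[OF contC]) auto

lemma exists_min: "\<exists>p. \<forall>z. J x p \<le> J x z"
proof -
  define R where "R = 2 * norm x / \<mu> + 1"
  have R0: "R \<ge> 0" using mu by (simp add: R_def)
  have "\<exists>p\<in>cball 0 R. \<forall>z\<in>cball 0 R. J x p \<le> J x z"
    by (rule continuous_attains_inf[OF compact_cball _ contJ]) (use R0 in auto)
  then obtain p where p: "p \<in> cball 0 R" "\<forall>z\<in>cball 0 R. J x p \<le> J x z" by blast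
  have "J x p \<le> J x z" for z
  proof (cases "z \<in> cball 0 R")
    case True then show ?thesis using p by auto
  next
    case False
    then have zR: "norm z > R" by auto
    have "\<mu>/2 * norm z > norm x" using zR mu unfolding R_def by (simp add: field_simps)
    then have pos: "norm z * (\<mu>/2 * norm z - norm x) > 0" using zR
      using R0 by (intro mult_pos_pos) auto
    have "inner x z \<le> norm x * norm z" by (rule norm_cauchy_schwarz)
    then have "J x z > 0" unfolding J_def using pos nn[of z]
      by (simp add: algebra_simps power2_eq_square)
    moreover have "J x 0 = 0" by (simp add: J_def C0)
    moreover have "J x p \<le> J x 0" using p(2) R0 by auto
    ultimately show ?thesis by simp
  qed
  then show ?thesis by blast
qed

lemma unique_min: "\<exists>p. {y. \<forall>z. J x y \<le> J x z} = {p}"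
proof -
  obtain p where p: "\<forall>z. J x p \<le> J x z" using exists_min by blast
  have "q = p" if q: "\<forall>z. J x q \<le> J x z" for q
  proof -
    have "J x p + \<mu>/2 * (norm (q - p))^2 \<le> J x q" by (rule strong[OF p])
    moreover have "J x q \<le> J x p" using q by auto
    ultimately have "\<mu>/2 * (norm (q - p))^2 \<le> 0" by simp
    then have "(norm (q - p))^2 \<le> 0" using mu by (simp add: mult_le_0_iff)
    then show ?thesis by simp
  qed
  then show ?thesis using p by blast
qed

definition P where "P x = (THE p. {y. \<forall>z. J x y \<le> J x z} = {p})"

lemma P_set: "{y. \<forall>z. J x y \<le> J x z} = {P x}"
proof -
  obtain p where p: "{y. \<forall>z. J x y \<le> J x z} = {p}" using unique_min by blast
  then have "P x = p" unfolding P_def by (rule the_equality) (use p in auto)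
  then show ?thesis using p by simp
qed

lemma P_min: "J x (P x) \<le> J x z"
  using P_set[of x] by auto

lemma P_mono: "\<mu> * (norm (P a - P b))^2 \<le> inner (a - b) (P a - P b)"
proof -
  have 1: "J a (P a) + \<mu>/2 * (norm (P b - P a))^2 \<le> J a (P b)"
    by (rule strong) (auto intro: P_min)
  have 2: "J b (P b) + \<mu>/2 * (norm (P a - P b))^2 \<le> J b (P a)"
    by (rule strong) (auto intro: P_min)
  have "norm (P b - P a) = norm (P a - P b)" by (rule norm_minus_commute)
  then show ?thesis using 1 2 unfolding J_def
    by (simp add: inner_diff_left inner_diff_right inner_commute algebra_simps)
qed

lemma P_lip: "norm (P a - P b) \<le> (1/\<mu>) * norm (a - b)"
proof -
  have "\<mu> * (norm (P a - P b))^2 \<le> norm (a - b) * norm (P a - P b)"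
    using P_mono norm_cauchy_schwarz order_trans by blast
  then have h: "norm (P a - P b) * (\<mu> * norm (P a - P b)) \<le> norm (P a - P b) * norm (a - b)"
    by (simp add: power2_eq_square algebra_simps)
  show ?thesis
  proof (cases "norm (P a - P b) = 0")
    case True then show ?thesis using mu by simp
  next
    case False
    then have "\<mu> * norm (P a - P b) \<le> norm (a - b)"
      by (intro mult_left_le_imp_le[OF h]) simp
    then show ?thesis using mu by (simp add: field_simps)
  qed
qed

definition f where "f x = - J x (P x)"

lemma f_ge: "f x \<ge> - J x y"
  unfolding f_def using P_min by auto

lemma J_shift: "J x y = J a y + inner (a - x) y"
  unfolding J_def by (simp add: inner_diff_left)

lemma f_convex: "convex_on UNIV f"
proof (rule convex_onI)
  fix t :: real and a b :: 'a assume t: "0 < t" "t < 1"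
  let ?z = "(1 - t) *\<^sub>R a + t *\<^sub>R b"
  have iz: "inner ?z y = (1-t)*inner a y + t*inner b y" for y
    by (simp add: inner_add_left)
  have Jz: "J ?z y = (1 - t) * J a y + t * J b y" for y
    unfolding J_def iz by (simp add: field_simps)
  have "f ?z = (1 - t) * (- J a (P ?z)) + t * (- J b (P ?z))"
    unfolding f_def Jz by simp
  also have "\<dots> \<le> (1 - t) * f a + t * f b"
    using t f_ge by (intro add_mono mult_left_mono) auto
  finally show "f ?z \<le> (1 - t) * f a + t * f b" .
qed auto

lemma f_deriv: "(f has_derivative (\<lambda>h. inner (P x) h)) (at x)"
  unfolding has_derivative_at_alt
proof (intro conjI allI impI)
  show "bounded_linear (\<lambda>h. inner (P x) h)" by (rule bounded_linear_inner_right)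
next
  fix e :: real assume e: "e > 0"
  show "\<exists>d>0. \<forall>y. norm (y - x) < d \<longrightarrow> norm (f y - f x - inner (P x) (y - x)) \<le> e * norm (y - x)"
  proof (intro exI[of _ "e * \<mu>"] conjI allI impI)
    show "e * \<mu> > 0" using e mu by simp
    fix y assume y: "norm (y - x) < e * \<mu>"
    have lo: "f y - f x - inner (P x) (y - x) \<ge> 0"
      using f_ge[of y "P x"] J_shift[of y "P x" x] unfolding f_def
      by (simp add: inner_diff_left inner_diff_right inner_commute algebra_simps)
    have "f x \<ge> f y - inner (y - x) (P y)"
      using f_ge[of x "P y"] J_shift[of x "P y" y] unfolding f_def
      by (simp add: inner_diff_left inner_diff_right inner_commute algebra_simps)
    then have "f y - f x - inner (P x) (y - x) \<le> inner (y - x) (P y - P x)"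
      by (simp add: inner_diff_left inner_diff_right inner_commute algebra_simps)
    also have "\<dots> \<le> norm (y - x) * norm (P y - P x)" by (rule norm_cauchy_schwarz)
    also have "\<dots> \<le> norm (y - x) * ((1/\<mu>) * norm (y - x))"
      by (intro mult_left_mono P_lip) auto
    also have "\<dots> \<le> norm (y - x) * e"
    proof (intro mult_left_mono)
      show "(1/\<mu>) * norm (y - x) \<le> e" using y mu by (simp add: field_simps)
    qed auto
    finally show "norm (f y - f x - inner (P x) (y - x)) \<le> e * norm (y - x)"
      using lo by (simp add: mult.commute)
  qed
qed

end

lemma inner_le_half: "inner (y::'a::real_inner) u \<le> 1/2*(norm y)^2 + 1/2*(norm u)^2"
proof -
  have "0 \<le> (norm (y - u))^2" by simp
  then show ?thesis unfolding power2_norm_eq_inner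
    by (simp add: inner_diff_left inner_diff_right inner_commute)
qed

lemma norm_diff_sq: "(norm (x - (y::'a::real_inner)))^2 = (norm x)^2 - 2 * inner x y + (norm y)^2"
  unfolding power2_norm_eq_inner by (simp add: inner_diff_left inner_diff_right inner_commute)

locale concr =
  fixes w1 w2 :: real
  assumes w1: "0 \<le> w1" and w12: "w1 \<le> w2"
begin

definition g :: "real^2 \<Rightarrow> real" where "g y = rowl w1 w2 y + 1/2 * (norm y)^2"

lemma rowl_nn: "rowl w1 w2 y \<ge> 0"
  unfolding rowl_def using w1 w12 by (intro add_nonneg_nonneg mult_nonneg_nonneg) auto

lemma g0: "g 0 = 0" by (simp add: g_def rowl_def)

lemma g_ge: "g y \<ge> 1/2 * (norm y)^2" using rowl_nn by (simp add: g_def)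

abbreviation "gE \<equiv> (\<lambda>y. ereal (rowl w1 w2 y + (1/2) * (norm y)^2))"

lemma conj_le: "fenchel_conj gE u \<le> ereal (1/2 * (norm u)^2)"
  unfolding fenchel_conj_def
proof (rule SUP_least)
  fix y :: "real^2"
  have "inner y u - (rowl w1 w2 y + 1/2 * (norm y)^2) \<le> 1/2 * (norm u)^2"
    using inner_le_half[of y u] rowl_nn[of y] by simp
  then show "ereal (inner y u) - gE y \<le> ereal (1/2 * (norm u)^2)" by simp
qed

lemma conj_ge: "ereal (inner y u - g y) \<le> fenchel_conj gE u"
proof -
  have "ereal (inner y u - g y) = ereal (inner y u) - gE y" by (simp add: g_def)
  also have "\<dots> \<le> fenchel_conj gE u" unfolding fenchel_conj_def by (rule SUP_upper) simp
  finally show ?thesis .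
qed

definition gs where "gs u = real_of_ereal (fenchel_conj gE u)"

lemma conj_eq: "fenchel_conj gE u = ereal (gs u)"
proof -
  have "fenchel_conj gE u \<noteq> \<infinity>" using conj_le[of u] by auto
  moreover have "fenchel_conj gE u \<noteq> -\<infinity>" using conj_ge[of 0 u] by auto
  ultimately show ?thesis unfolding gs_def by (cases "fenchel_conj gE u") auto
qed

lemma gs_ge: "inner y u - g y \<le> gs u" using conj_ge[of y u] unfolding conj_eq by simp
lemma gs_le: "gs u \<le> 1/2 * (norm u)^2" using conj_le[of u] unfolding conj_eq by simp

lemma biconj_eq: "fenchel_biconj gE x = (SUP u. ereal (inner u x - gs u))"
proof -
  have "fenchel_conj gE = (\<lambda>u. ereal (gs u))" by (rule ext) (rule conj_eq)
  then show ?thesis unfolding fenchel_biconj_def by (simp add: fenchel_conj_def)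
qed

lemma biconj_le: "fenchel_biconj gE x \<le> ereal (g x)"
  unfolding biconj_eq
proof (rule SUP_least)
  fix u show "ereal (inner u x - gs u) \<le> ereal (g x)" using gs_ge[of x u] by (simp add: inner_commute)
qed

lemma biconj_ge: "ereal (inner u x - gs u) \<le> fenchel_biconj gE x"
  unfolding biconj_eq by (rule SUP_upper) simp

definition Gr where "Gr x = real_of_ereal (fenchel_biconj gE x)"

lemma biconj_eq': "fenchel_biconj gE x = ereal (Gr x)"
proof -
  have "fenchel_biconj gE x \<noteq> \<infinity>" using biconj_le[of x] by auto
  moreover have "fenchel_biconj gE x \<noteq> -\<infinity>" using biconj_ge[of x x] by auto
  ultimately show ?thesis unfolding Gr_def by (cases "fenchel_biconj gE x") auto
qed

lemma Gr_ub: "inner u x - gs u \<le> Gr x" using biconj_ge[of u x] unfolding biconj_eq' by simp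
lemma Gr_le: "Gr x \<le> g x" using biconj_le[of x] unfolding biconj_eq' by simp
lemma Gr_lub: assumes "\<And>u. inner u x - gs u \<le> c" shows "Gr x \<le> c"
proof -
  have "fenchel_biconj gE x \<le> ereal c" unfolding biconj_eq
    by (rule SUP_least) (use assms in simp)
  then show ?thesis unfolding biconj_eq' by simp
qed
lemma Gr_ge: "1/2 * (norm x)^2 \<le> Gr x"
proof -
  have "inner x x - gs x \<le> Gr x" by (rule Gr_ub)
  moreover have "inner x x = (norm x)^2" by (simp add: power2_norm_eq_inner)
  ultimately show ?thesis using gs_le[of x] by simp
qed
lemma Gr0: "Gr 0 = 0" using Gr_le[of 0] Gr_ge[of 0] g0 by simp

lemma Gr_convex: "convex_on UNIV Gr"
proof (rule convex_onI)
  fix t :: real and a b :: "real^2" assume t: "0 < t" "t < 1"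
  show "Gr ((1 - t) *\<^sub>R a + t *\<^sub>R b) \<le> (1 - t) * Gr a + t * Gr b"
  proof (rule Gr_lub)
    fix u
    have "inner u ((1 - t) *\<^sub>R a + t *\<^sub>R b) - gs u = (1 - t) * (inner u a - gs u) + t * (inner u b - gs u)"
      by (simp add: inner_add_right algebra_simps)
    also have "\<dots> \<le> (1 - t) * Gr a + t * Gr b"
      using t by (intro add_mono mult_left_mono Gr_ub) auto
    finally show "inner u ((1 - t) *\<^sub>R a + t *\<^sub>R b) - gs u \<le> (1 - t) * Gr a + t * Gr b" .
  qed
qed auto

lemma env_eq: "rowl_env w1 w2 y = ereal (Gr y - 1/2 * (norm y)^2)"
  unfolding rowl_env_def biconj_eq' by simp

end

theorem corollary2:
  fixes w1 w2 \<delta> :: real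
  assumes "0 \<le> w1" and "w1 < w2" and "\<delta> > 0"
  shows "sprox_defined (\<lambda>y. rowl_env w1 w2 y * ereal (1 / (\<delta> + 1))) \<and>
    (\<exists>f :: real^2 \<Rightarrow> real. convex_on UNIV f \<and>
       (\<forall>x. (f has_derivative
              (\<lambda>h. inner (s_Prox (\<lambda>y. rowl_env w1 w2 y * ereal (1 / (\<delta> + 1))) x) h)) (at x)) \<and>
       lipschitz_on (1 + 1 / \<delta>) UNIV (s_Prox (\<lambda>y. rowl_env w1 w2 y * ereal (1 / (\<delta> + 1)))))"
proof -
  interpret c: concr w1 w2 using assms by unfold_locales auto
  define C where "C y = c.Gr y / (\<delta> + 1)" for y
  define \<mu> where "\<mu> = \<delta> / (\<delta> + 1)"
  interpret G: gen C \<mu>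
  proof
    show "convex_on UNIV C" unfolding C_def
      using c.Gr_convex assms(3) by (intro convex_on_cdiv) auto
    show "0 \<le> C y" for y unfolding C_def using c.Gr_ge[of y] assms(3)
      by (intro divide_nonneg_pos) (auto intro: order_trans[OF _ c.Gr_ge])
    show "C 0 = 0" by (simp add: C_def c.Gr0)
    show "0 < \<mu>" using assms(3) by (simp add: \<mu>_def)
  qed
  define phi where "phi = (\<lambda>y. rowl_env w1 w2 y * ereal (1 / (\<delta> + 1)))"
  have phi_eq: "phi y + ereal (1/2 * (norm (x - y))^2) = ereal (G.J x y + 1/2 * (norm x)^2)" for x y
  proof -
    have "phi y + ereal (1/2 * (norm (x - y))^2) = ereal ((c.Gr y - 1/2 * (norm y)^2) * (1 / (\<delta> + 1)) + 1/2 * (norm (x - y))^2)"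
      unfolding phi_def c.env_eq by simp
    also have "(c.Gr y - 1/2 * (norm y)^2) * (1 / (\<delta> + 1)) + 1/2 * (norm (x - y))^2 = G.J x y + 1/2 * (norm x)^2"
    proof -
      have a1: "c.Gr y / (\<delta> + 1) = c.Gr y * (1 / (\<delta> + 1))" by simp
      have a2: "\<delta> / (\<delta> + 1) = 1 - 1 / (\<delta> + 1)" using assms(3) by (simp add: field_simps)
      obtain a where a3: "1 / (\<delta> + 1) = a" by blast
      show ?thesis
        unfolding G.J_def unfolding C_def \<mu>_def norm_diff_sq a1 a2 a3
        by (simp add: field_simps)
    qed
    finally show ?thesis .
  qed
  have ps: "prox_set phi x = {G.P x}" for x
  proof -
    have "prox_set phi x = {y. \<forall>z. G.J x y \<le> G.J x z}"
      unfolding prox_set_def phi_eq by simp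
    then show ?thesis using G.P_set by simp
  qed
  have sp: "s_Prox phi = G.P"
    by (rule ext) (simp add: s_Prox_def ps)
  have "sprox_defined phi" unfolding sprox_defined_def ps by blast
  moreover have "lipschitz_on (1 + 1 / \<delta>) UNIV G.P"
  proof (rule lipschitz_onI)
    fix a b :: "real^2"
    have "1 / \<mu> = 1 + 1 / \<delta>" using assms(3) by (simp add: \<mu>_def field_simps)
    then show "dist (G.P a) (G.P b) \<le> (1 + 1 / \<delta>) * dist a b"
      using G.P_lip[of a b] by (simp add: dist_norm)
    show "0 \<le> 1 + 1 / \<delta>" using assms(3) by simp
  qed
  ultimately show ?thesis unfolding phi_def[symmetric] sp
    using G.f_convex G.f_deriv by blast
qed

end
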